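(* Let $Z\colon\mathbb{R}^n\to\mathbb{R}^m$ be a jointly measurable random map defined on the probability space $(\Omega,\mathcal{F},\mathbb{P})$. Let $\mu$ be a Borel probability measure on $\mathbb{R}^n$ and let $\gamma\in\mathbb{R}$. Then the set $$\mathcal{D}=\Big\{(\omega,t)\in\Omega\times\mathbb{R}^n:\ \liminf_{r\to0+}r^{-\gamma}\mu(\{s: Z(s,\omega)\in B(Z(t,\omega),r)\})=0\Big\}$$ belongs to $\mathcal{F}\otimes\mathcal{B}(\mathbb{R}^n)$.
   Context: $Z$ is jointly measurable if $(t,\omega)\mapsto Z(t,\omega)$ is measurable from $\mathcal{B}(\mathbb{R}^n)\otimes\mathcal{F}$ to $\mathcal{B}(\mathbb{R}^m)$. $B(z,r)$ is the closed Euclidean ball in $\mathbb{R}^m$. *)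

theory Defs
  imports "HOL-Probability.Probability"
begin

end

theory Submission
  imports Defs
begin

lemma liminf_zero_iff:
  fixes g :: "real \<Rightarrow> real"
  assumes nn: "\<And>r. 0 < r \<Longrightarrow> 0 \<le> g r"
  shows "Liminf (at_right 0) (\<lambda>r. ereal (g r)) = 0 \<longleftrightarrow>
         (\<forall>e>0. \<forall>\<epsilon>>0. \<exists>y. 0 < y \<and> y < e \<and> g y < \<epsilon>)"
proof -
  have S: "\<And>e. {0<..} \<inter> ball 0 e - {0} = {0<..<(e::real)}" by (auto simp: dist_real_def)
  have L: "Liminf (at_right 0) (\<lambda>r. ereal (g r)) = (SUP e\<in>{0<..}. INF y\<in>{0<..<e}. ereal (g y))"
    unfolding Liminf_within S ..
  have I0: "\<And>e. 0 \<le> (INF y\<in>{0<..<e}. ereal (g y))"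
    by (rule INF_greatest) (use nn in auto)
  show ?thesis
  proof
    assume "Liminf (at_right 0) (\<lambda>r. ereal (g r)) = 0"
    then have Z: "\<And>e. e > 0 \<Longrightarrow> (INF y\<in>{0<..<e}. ereal (g y)) \<le> 0"
      unfolding L by (metis SUP_upper greaterThan_iff)
    show "\<forall>e>0. \<forall>\<epsilon>>0. \<exists>y. 0 < y \<and> y < e \<and> g y < \<epsilon>"
    proof (intro allI impI)
      fix e \<epsilon> :: real assume "e > 0" "\<epsilon> > 0"
      then have "(INF y\<in>{0<..<e}. ereal (g y)) < ereal \<epsilon>" using Z[of e] by (simp add: le_less_trans)
      then obtain y where "y \<in> {0<..<e}" "ereal (g y) < ereal \<epsilon>" by (auto simp: INF_less_iff)
      then show "\<exists>y. 0 < y \<and> y < e \<and> g y < \<epsilon>" by auto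
    qed
  next
    assume H: "\<forall>e>0. \<forall>\<epsilon>>0. \<exists>y. 0 < y \<and> y < e \<and> g y < \<epsilon>"
    have "\<And>e. e > 0 \<Longrightarrow> (INF y\<in>{0<..<e}. ereal (g y)) \<le> 0"
    proof -
      fix e :: real assume e: "e > 0"
      show "(INF y\<in>{0<..<e}. ereal (g y)) \<le> 0"
      proof (rule ereal_le_epsilon2)
        fix \<epsilon> :: real assume "\<epsilon> > 0"
        then obtain y where "0 < y" "y < e" "g y < \<epsilon>" using H e by blast
        then have "(INF y\<in>{0<..<e}. ereal (g y)) \<le> ereal (g y)" by (intro INF_lower) auto
        then show "(INF y\<in>{0<..<e}. ereal (g y)) \<le> 0 + ereal \<epsilon>" using \<open>g y < \<epsilon>\<close> by (simp add: order_trans)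
      qed
    qed
    then have "(SUP e\<in>{0<..}. INF y\<in>{0<..<e}. ereal (g y)) \<le> 0" by (intro SUP_least) auto
    moreover have "0 \<le> (SUP e\<in>{0<..}. INF y\<in>{0<..<e}. ereal (g y))"
      using I0 by (meson SUP_upper2 greaterThan_iff zero_less_one)
    ultimately show "Liminf (at_right 0) (\<lambda>r. ereal (g r)) = 0" unfolding L by simp
  qed
qed


lemma rat_approx:
  fixes h :: "real \<Rightarrow> real"
  assumes mono: "mono h" and nn: "\<And>r. 0 \<le> h r"
    and y: "0 < y" and lt: "y powr (-\<gamma>) * h y < \<epsilon>"
  shows "\<exists>q::rat. 0 < real_of_rat q \<and> real_of_rat q < y \<and>
           real_of_rat q powr (-\<gamma>) * h (real_of_rat q) < \<epsilon>"
proof -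
  have "((\<lambda>q. q powr (-\<gamma>) * h y) \<longlongrightarrow> y powr (-\<gamma>) * h y) (at_left y)"
    using y by (intro tendsto_intros) auto
  then have "eventually (\<lambda>q. q powr (-\<gamma>) * h y < \<epsilon>) (at_left y)"
    using lt by (rule order_tendstoD)
  moreover have "eventually (\<lambda>q. q \<in> {0<..<y}) (at_left y)"
    using y by (rule eventually_at_left_real)
  ultimately have "eventually (\<lambda>q. q \<in> {0<..<y} \<and> q powr (-\<gamma>) * h y < \<epsilon>) (at_left y)"
    by (rule eventually_conj[rotated])
  then obtain b where b: "b < y" "\<And>q. b < q \<Longrightarrow> q < y \<Longrightarrow> q \<in> {0<..<y} \<and> q powr (-\<gamma>) * h y < \<epsilon>"
    unfolding eventually_at_left_field by blast
  obtain r where r: "r \<in> \<rat>" "b < r" "r < y" using Rats_dense_in_real[OF b(1)] by blast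
  then obtain q where q: "r = real_of_rat q" by (auto simp: Rats_def)
  have r0: "0 < r" "r powr (-\<gamma>) * h y < \<epsilon>" using b(2)[OF r(2,3)] by auto
  have "r powr (-\<gamma>) * h r \<le> r powr (-\<gamma>) * h y"
    using mono r(3) by (intro mult_left_mono) (auto simp: mono_def)
  then have "r powr (-\<gamma>) * h r < \<epsilon>" using r0 by linarith
  then show ?thesis using r0 r q by (intro exI[of _ q]) auto
qed

lemma rat_char:
  fixes h :: "real \<Rightarrow> real"
  assumes mono: "mono h" and nn: "\<And>r. 0 \<le> h r"
  shows "(\<forall>e>0. \<forall>\<epsilon>>0. \<exists>y. 0 < y \<and> y < e \<and> y powr (-\<gamma>) * h y < \<epsilon>) \<longleftrightarrow>
    (\<forall>j k::nat. \<exists>q::rat. 0 < real_of_rat q \<and> real_of_rat q < 1 / real (Suc j) \<and>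
        real_of_rat q powr (-\<gamma>) * h (real_of_rat q) < 1 / real (Suc k))"
proof
  assume H: "\<forall>e>0. \<forall>\<epsilon>>0. \<exists>y. 0 < y \<and> y < e \<and> y powr (-\<gamma>) * h y < \<epsilon>"
  show "\<forall>j k::nat. \<exists>q::rat. 0 < real_of_rat q \<and> real_of_rat q < 1 / real (Suc j) \<and>
        real_of_rat q powr (-\<gamma>) * h (real_of_rat q) < 1 / real (Suc k)"
  proof (intro allI)
    fix j k :: nat
    obtain y where y: "0 < y" "y < 1 / real (Suc j)" "y powr (-\<gamma>) * h y < 1 / real (Suc k)"
      using H by (metis of_nat_0_less_iff zero_less_Suc zero_less_divide_1_iff)
    from rat_approx[OF mono nn y(1) y(3)] obtain q where
      "0 < real_of_rat q" "real_of_rat q < y" "real_of_rat q powr (-\<gamma>) * h (real_of_rat q) < 1 / real (Suc k)"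
      by blast
    then show "\<exists>q::rat. 0 < real_of_rat q \<and> real_of_rat q < 1 / real (Suc j) \<and>
        real_of_rat q powr (-\<gamma>) * h (real_of_rat q) < 1 / real (Suc k)"
      using y(2) by (intro exI[of _ q]) auto
  qed
next
  assume H: "\<forall>j k::nat. \<exists>q::rat. 0 < real_of_rat q \<and> real_of_rat q < 1 / real (Suc j) \<and>
        real_of_rat q powr (-\<gamma>) * h (real_of_rat q) < 1 / real (Suc k)"
  show "\<forall>e>0. \<forall>\<epsilon>>0. \<exists>y. 0 < y \<and> y < e \<and> y powr (-\<gamma>) * h y < \<epsilon>"
  proof (intro allI impI)
    fix e \<epsilon> :: real assume "e > 0" "\<epsilon> > 0"
    obtain j :: nat where j: "1 / real (Suc j) < e" using \<open>e > 0\<close>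
      by (metis nat_approx_posE)
    obtain k :: nat where k: "1 / real (Suc k) < \<epsilon>" using \<open>\<epsilon> > 0\<close>
      by (metis nat_approx_posE)
    from H obtain q where "0 < real_of_rat q" "real_of_rat q < 1 / real (Suc j)"
        "real_of_rat q powr (-\<gamma>) * h (real_of_rat q) < 1 / real (Suc k)" by blast
    then show "\<exists>y. 0 < y \<and> y < e \<and> y powr (-\<gamma>) * h y < \<epsilon>"
      using j k by (intro exI[of _ "real_of_rat q"]) auto
  qed
qed


theorem lemma3p5:
  fixes M :: "'w measure"
    and Z :: "real ^ 'n \<Rightarrow> 'w \<Rightarrow> real ^ 'm"
    and \<mu> :: "(real ^ 'n) measure"
    and \<gamma> :: real
  assumes "prob_space M"
    and "(\<lambda>(t, \<omega>). Z t \<omega>) \<in> borel_measurable (borel \<Otimes>\<^sub>M M)"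
    and "prob_space \<mu>"
    and "sets \<mu> = sets borel"
  shows "{(\<omega>, t) \<in> space M \<times> UNIV.
           Liminf (at_right (0::real))
             (\<lambda>r. ereal (r powr (-\<gamma>) * measure \<mu> {s. Z s \<omega> \<in> cball (Z t \<omega>) r})) = 0}
         \<in> sets (M \<Otimes>\<^sub>M borel)"
proof -
  interpret mu: prob_space \<mu> by fact
  define N where "N = M \<Otimes>\<^sub>M (borel :: (real ^ 'n) measure)"
  have spmu: "space \<mu> = UNIV" using sets_eq_imp_space_eq[OF assms(4)] by simp
  have Zm[measurable]: "(\<lambda>(t, \<omega>). Z t \<omega>) \<in> borel_measurable (borel \<Otimes>\<^sub>M M)" by fact
  have idm[measurable]: "(\<lambda>x. x) \<in> measurable \<mu> borel"
    using assms(4) by (simp add: measurable_ident_sets)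
  define Q where "Q r = {p \<in> space (N \<Otimes>\<^sub>M \<mu>). dist (Z (snd (fst p)) (fst (fst p))) (Z (snd p) (fst (fst p))) \<le> r}" for r
  have m1: "(\<lambda>p. Z (snd (fst p)) (fst (fst p))) \<in> borel_measurable (N \<Otimes>\<^sub>M \<mu>)"
  proof -
    have "(\<lambda>p. (snd (fst p), fst (fst p))) \<in> measurable (N \<Otimes>\<^sub>M \<mu>) (borel \<Otimes>\<^sub>M M)"
      unfolding N_def by measurable
    from measurable_compose[OF this Zm] show ?thesis by simp
  qed
  have m2: "(\<lambda>p. Z (snd p) (fst (fst p))) \<in> borel_measurable (N \<Otimes>\<^sub>M \<mu>)"
  proof -
    have "(\<lambda>p. (snd p, fst (fst p))) \<in> measurable (N \<Otimes>\<^sub>M \<mu>) (borel \<Otimes>\<^sub>M M)"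
      unfolding N_def by measurable
    from measurable_compose[OF this Zm] show ?thesis by simp
  qed
  have Qs: "Q r \<in> sets (N \<Otimes>\<^sub>M \<mu>)" for r
    unfolding Q_def using m1 m2 by measurable
  define hh where "hh x r = measure \<mu> (Pair x -` Q r)" for x r
  have hhm[measurable]: "(\<lambda>x. hh x r) \<in> borel_measurable N" for r
  proof -
    have "(\<lambda>x. emeasure \<mu> (Pair x -` Q r)) \<in> borel_measurable N"
      by (rule mu.measurable_emeasure_Pair[OF Qs])
    then show ?thesis unfolding hh_def measure_def by measurable
  qed
  have hh_eq: "hh x r = measure \<mu> {s. Z s (fst x) \<in> cball (Z (snd x) (fst x)) r}"
    if "x \<in> space N" for x r
    using that unfolding hh_def Q_def by (simp add: space_pair_measure spmu mem_cball)
  have hh_mono: "mono (hh x)" for x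
  proof (rule monoI)
    fix a b :: real assume "a \<le> b"
    have "Pair x -` Q a \<subseteq> Pair x -` Q b" using \<open>a \<le> b\<close> unfolding Q_def by auto
    then show "hh x a \<le> hh x b" unfolding hh_def
      by (intro mu.finite_measure_mono) (auto intro: sets_Pair1[OF Qs])
  qed
  have hh_nn: "0 \<le> hh x r" for x r unfolding hh_def by simp
  define P where "P x \<longleftrightarrow> (\<forall>j k::nat. \<exists>q::rat. 0 < real_of_rat q \<and> real_of_rat q < 1 / real (Suc j) \<and>
        real_of_rat q powr (-\<gamma>) * hh x (real_of_rat q) < 1 / real (Suc k))" for x
  have Pm: "{x \<in> space N. P x} \<in> sets N"
    unfolding P_def by measurable
  have "{(\<omega>, t) \<in> space M \<times> UNIV.
           Liminf (at_right (0::real))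
             (\<lambda>r. ereal (r powr (-\<gamma>) * measure \<mu> {s. Z s \<omega> \<in> cball (Z t \<omega>) r})) = 0}
        = {x \<in> space N. P x}"
  proof (intro set_eqI iffI)
    fix x
    assume x: "x \<in> {(\<omega>, t) \<in> space M \<times> UNIV.
           Liminf (at_right (0::real))
             (\<lambda>r. ereal (r powr (-\<gamma>) * measure \<mu> {s. Z s \<omega> \<in> cball (Z t \<omega>) r})) = 0}"
    then have xs: "x \<in> space N" by (auto simp: N_def space_pair_measure)
    have "Liminf (at_right (0::real)) (\<lambda>r. ereal (r powr (-\<gamma>) * hh x r)) = 0"
      using x by (auto simp: hh_eq[OF xs] split: prod.splits)
    then have "\<forall>e>0. \<forall>\<epsilon>>0. \<exists>y. 0 < y \<and> y < e \<and> y powr (-\<gamma>) * hh x y < \<epsilon>"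
      by (subst (asm) liminf_zero_iff) (auto intro: mult_nonneg_nonneg hh_nn)
    then have "P x" unfolding P_def using rat_char[OF hh_mono hh_nn] by blast
    then show "x \<in> {x \<in> space N. P x}" using xs by auto
  next
    fix x
    assume x: "x \<in> {x \<in> space N. P x}"
    then have xs: "x \<in> space N" by auto
    have "Liminf (at_right (0::real)) (\<lambda>r. ereal (r powr (-\<gamma>) * hh x r)) = 0"
    proof -
      have "\<forall>e>0. \<forall>\<epsilon>>0. \<exists>y. 0 < y \<and> y < e \<and> y powr (-\<gamma>) * hh x y < \<epsilon>"
        using x unfolding P_def using rat_char[OF hh_mono hh_nn] by blast
      then show ?thesis
        by (subst liminf_zero_iff) (auto intro: mult_nonneg_nonneg hh_nn)
    qed
    then show "x \<in> {(\<omega>, t) \<in> space M \<times> UNIV.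
           Liminf (at_right (0::real))
             (\<lambda>r. ereal (r powr (-\<gamma>) * measure \<mu> {s. Z s \<omega> \<in> cball (Z t \<omega>) r})) = 0}"
      using xs by (auto simp: hh_eq[OF xs] N_def space_pair_measure split: prod.splits)
  qed
  then show ?thesis using Pm by (simp add: N_def)
qed

end
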